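(* Let $\mathfrak{K}$ be a 2-category, let $\mathscr{A}$ be an object of $\mathfrak{K}$, and let $T=(T,\mu,\eta)$ be a monad on $\mathscr{A}$. Let $G\dashv S$ be an adjunction between endomorphisms $G,S\colon\mathscr{A}\to\mathscr{A}$, with unit $u\colon 1_{\mathscr{A}}\Rightarrow SG$ and counit $e\colon GS\Rightarrow 1_{\mathscr{A}}$. Then adjoint mateship, given on 2-cells by $$\zeta = eTG\circ G\lambda G\circ GTu,\qquad \delta = eTGG\circ G\nu GG\circ GSuG\circ Gu,\qquad \varepsilon = eT\circ G\sigma,$$ (which is a bijection between triples of 2-cells $(\nu\colon SS\Rightarrow ST,\ \sigma\colon 1_{\mathscr{A}}\Rightarrow ST,\ \lambda\colon TS\Rightarrow ST)$ and triples $(\delta\colon G\Rightarrow TGG,\ \varepsilon\colon G\Rightarrow T,\ \zeta\colon GT\Rightarrow TG)$) restricts to a bijection between wreath structures $(\nu,\sigma,\lambda)$ on $S$ around $T$ and mixed opwreath structures $(\zeta,\delta,\varepsilon)$ on $G$ around $T$.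
   Context: Notation: composition of 1-cells is written by juxtaposition ($XY=X\circ Y$), and whiskering of a 2-cell $\alpha$ by 1-cells is written $X\alpha$, $\alpha Y$; $\circ$ between 2-cells is vertical composition. A wreath around the monad $T$ on $\mathscr{A}$ consists of an endomorphism $S$ of $\mathscr{A}$ and 2-cells $\nu\colon SS\Rightarrow ST$, $\sigma\colon 1_{\mathscr{A}}\Rightarrow ST$, $\lambda\colon TS\Rightarrow ST$ satisfying the seven axioms: (W1) $\lambda\circ\mu S = S\mu\circ\lambda T\circ T\lambda$; (W2) $\lambda\circ\eta S = S\eta$; (W3) $S\mu\circ\lambda T\circ T\sigma = S\mu\circ\sigma T$; (W4) $S\mu\circ\nu T\circ S\lambda\circ\lambda S = S\mu\circ\lambda T\circ T\nu$; (W5) $S\mu\circ\nu T\circ S\nu = S\mu\circ\nu T\circ S\lambda\circ\nu S$; (W6) $S\mu\circ\nu T\circ S\sigma = S\eta$; (W7) $S\mu\circ\nu T\circ S\lambda\circ\sigma S = S\eta$. (Equivalently, a wreath is a monad on $(\mathscr{A},T)$ in the 2-category $\mathrm{EM}(\mathfrak{K})$ of monads, morphisms $(F,\phi)$ with $\phi\colon SF\Rightarrow FT$, and 2-cells $\rho\colon F\Rightarrow GS$.) A mixed opwreath around the monad $T$ consists of an endomorphism $G$ of $\mathscr{A}$ and 2-cells $\zeta\colon GT\Rightarrow TG$, $\delta\colon G\Rightarrow TGG$, $\varepsilon\colon G\Rightarrow T$ satisfying the seven axioms: (M1) $\zeta\circ G\mu = \mu G\circ T\zeta\circ\zeta T$;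 (M2) $\zeta\circ G\eta = \eta G$; (M3) $\mu\circ\varepsilon T = \mu\circ T\varepsilon\circ\zeta$; (M4) $\mu GG\circ T\zeta G\circ TG\zeta\circ\delta T = \mu GG\circ T\delta\circ\zeta$; (M5) $\mu GGG\circ T\delta G\circ\delta = \mu GGG\circ T\zeta GG\circ TG\delta\circ\delta$; (M6) $\mu G\circ T\varepsilon G\circ\delta = \eta G$; (M7) $\mu G\circ T\zeta\circ TG\varepsilon\circ\delta = \eta G$. (Equivalently, a comonad on $(\mathscr{A},T)$ in the Kleisli-completion 2-category $\mathrm{KL}(\mathfrak{K})$.) *)

theory Defs
  imports Main
begin

text \<open>Composition of 1-cells: cmp X Y = X Y = X after Y (requires src X = trg Y).\<close>

record ('o, 'm, 'c) two_cat =
  ob   :: "'o set"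
  hom  :: "'m set"
  src  :: "'m \<Rightarrow> 'o"
  trg  :: "'m \<Rightarrow> 'o"
  idm  :: "'o \<Rightarrow> 'm"
  cmp  :: "'m \<Rightarrow> 'm \<Rightarrow> 'm"
  cell :: "'c set"
  dom2 :: "'c \<Rightarrow> 'm"
  cod2 :: "'c \<Rightarrow> 'm"
  idc  :: "'m \<Rightarrow> 'c"
  vc   :: "'c \<Rightarrow> 'c \<Rightarrow> 'c"
  hc   :: "'c \<Rightarrow> 'c \<Rightarrow> 'c"

definition two_category :: "('o, 'm, 'c, 'x) two_cat_scheme \<Rightarrow> bool" where
  "two_category C \<longleftrightarrow>
     (\<forall>a\<in>ob C. idm C a \<in> hom C \<and> src C (idm C a) = a \<and> trg C (idm C a) = a)
   \<and> (\<forall>X\<in>hom C. src C X \<in> ob C \<and> trg C X \<in> ob C)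
   \<and> (\<forall>X\<in>hom C. \<forall>Y\<in>hom C. src C X = trg C Y \<longrightarrow>
        cmp C X Y \<in> hom C \<and> src C (cmp C X Y) = src C Y \<and> trg C (cmp C X Y) = trg C X)
   \<and> (\<forall>X\<in>hom C. \<forall>Y\<in>hom C. \<forall>Z\<in>hom C. src C X = trg C Y \<longrightarrow> src C Y = trg C Z \<longrightarrow>
        cmp C (cmp C X Y) Z = cmp C X (cmp C Y Z))
   \<and> (\<forall>X\<in>hom C. cmp C (idm C (trg C X)) X = X \<and> cmp C X (idm C (src C X)) = X)
   \<and> (\<forall>a\<in>cell C. dom2 C a \<in> hom C \<and> cod2 C a \<in> hom C
        \<and> src C (dom2 C a) = src C (cod2 C a) \<and> trg C (dom2 C a) = trg C (cod2 C a))
   \<and> (\<forall>X\<in>hom C. idc C X \<in> cell C \<and> dom2 C (idc C X) = X \<and> cod2 C (idc C X) = X)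
   \<and> (\<forall>a\<in>cell C. \<forall>b\<in>cell C. dom2 C a = cod2 C b \<longrightarrow>
        vc C a b \<in> cell C \<and> dom2 C (vc C a b) = dom2 C b \<and> cod2 C (vc C a b) = cod2 C a)
   \<and> (\<forall>a\<in>cell C. \<forall>b\<in>cell C. \<forall>c\<in>cell C. dom2 C a = cod2 C b \<longrightarrow> dom2 C b = cod2 C c \<longrightarrow>
        vc C (vc C a b) c = vc C a (vc C b c))
   \<and> (\<forall>a\<in>cell C. vc C (idc C (cod2 C a)) a = a \<and> vc C a (idc C (dom2 C a)) = a)
   \<and> (\<forall>a\<in>cell C. \<forall>b\<in>cell C. src C (dom2 C a) = trg C (dom2 C b) \<longrightarrow>
        hc C a b \<in> cell C \<and> dom2 C (hc C a b) = cmp C (dom2 C a) (dom2 C b)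
        \<and> cod2 C (hc C a b) = cmp C (cod2 C a) (cod2 C b))
   \<and> (\<forall>a\<in>cell C. \<forall>b\<in>cell C. \<forall>c\<in>cell C.
        src C (dom2 C a) = trg C (dom2 C b) \<longrightarrow> src C (dom2 C b) = trg C (dom2 C c) \<longrightarrow>
        hc C (hc C a b) c = hc C a (hc C b c))
   \<and> (\<forall>a\<in>cell C. hc C (idc C (idm C (trg C (dom2 C a)))) a = a
        \<and> hc C a (idc C (idm C (src C (dom2 C a)))) = a)
   \<and> (\<forall>X\<in>hom C. \<forall>Y\<in>hom C. src C X = trg C Y \<longrightarrow> hc C (idc C X) (idc C Y) = idc C (cmp C X Y))
   \<and> (\<forall>a\<in>cell C. \<forall>a'\<in>cell C. \<forall>b\<in>cell C. \<forall>b'\<in>cell C.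
        dom2 C a = cod2 C a' \<longrightarrow> dom2 C b = cod2 C b' \<longrightarrow> src C (dom2 C a) = trg C (dom2 C b) \<longrightarrow>
        hc C (vc C a a') (vc C b b') = vc C (hc C a b) (hc C a' b'))"

definition wl :: "('o, 'm, 'c, 'x) two_cat_scheme \<Rightarrow> 'm \<Rightarrow> 'c \<Rightarrow> 'c" where
  "wl C X a = hc C (idc C X) a"

definition wr :: "('o, 'm, 'c, 'x) two_cat_scheme \<Rightarrow> 'c \<Rightarrow> 'm \<Rightarrow> 'c" where
  "wr C a X = hc C a (idc C X)"

definition cell_in :: "('o, 'm, 'c, 'x) two_cat_scheme \<Rightarrow> 'c \<Rightarrow> 'm \<Rightarrow> 'm \<Rightarrow> bool" where
  "cell_in C a X Y \<longleftrightarrow> a \<in> cell C \<and> dom2 C a = X \<and> cod2 C a = Y"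

definition endo :: "('o, 'm, 'c, 'x) two_cat_scheme \<Rightarrow> 'o \<Rightarrow> 'm \<Rightarrow> bool" where
  "endo C A X \<longleftrightarrow> X \<in> hom C \<and> src C X = A \<and> trg C X = A"

definition monad :: "('o, 'm, 'c, 'x) two_cat_scheme \<Rightarrow> 'o \<Rightarrow> 'm \<Rightarrow> 'c \<Rightarrow> 'c \<Rightarrow> bool" where
  "monad C A T mu eta \<longleftrightarrow>
     endo C A T
   \<and> cell_in C mu (cmp C T T) T
   \<and> cell_in C eta (idm C A) T
   \<and> vc C mu (wl C T mu) = vc C mu (wr C mu T)
   \<and> vc C mu (wr C eta T) = idc C T
   \<and> vc C mu (wl C T eta) = idc C T"

definition adjunction :: "('o, 'm, 'c, 'x) two_cat_scheme \<Rightarrow> 'o \<Rightarrow> 'm \<Rightarrow> 'm \<Rightarrow> 'c \<Rightarrow> 'c \<Rightarrow> bool" where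
  "adjunction C A G S u e \<longleftrightarrow>
     endo C A G \<and> endo C A S
   \<and> cell_in C u (idm C A) (cmp C S G)
   \<and> cell_in C e (cmp C G S) (idm C A)
   \<and> vc C (wr C e G) (wl C G u) = idc C G
   \<and> vc C (wl C S e) (wr C u S) = idc C S"

definition wreath :: "('o, 'm, 'c, 'x) two_cat_scheme \<Rightarrow> 'o \<Rightarrow> 'm \<Rightarrow> 'c \<Rightarrow> 'c \<Rightarrow>
    'm \<Rightarrow> 'c \<Rightarrow> 'c \<Rightarrow> 'c \<Rightarrow> bool" where
  "wreath C A T mu eta S nu sigma lam \<longleftrightarrow>
     endo C A S
   \<and> cell_in C nu (cmp C S S) (cmp C S T)
   \<and> cell_in C sigma (idm C A) (cmp C S T)
   \<and> cell_in C lam (cmp C T S) (cmp C S T)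
   \<comment> \<open>W1\<close>
   \<and> vc C lam (wr C mu S) = vc C (wl C S mu) (vc C (wr C lam T) (wl C T lam))
   \<comment> \<open>W2\<close>
   \<and> vc C lam (wr C eta S) = wl C S eta
   \<comment> \<open>W3\<close>
   \<and> vc C (wl C S mu) (vc C (wr C lam T) (wl C T sigma)) = vc C (wl C S mu) (wr C sigma T)
   \<comment> \<open>W4\<close>
   \<and> vc C (wl C S mu) (vc C (wr C nu T) (vc C (wl C S lam) (wr C lam S)))
       = vc C (wl C S mu) (vc C (wr C lam T) (wl C T nu))
   \<comment> \<open>W5\<close>
   \<and> vc C (wl C S mu) (vc C (wr C nu T) (wl C S nu))
       = vc C (wl C S mu) (vc C (wr C nu T) (vc C (wl C S lam) (wr C nu S)))
   \<comment> \<open>W6\<close>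
   \<and> vc C (wl C S mu) (vc C (wr C nu T) (wl C S sigma)) = wl C S eta
   \<comment> \<open>W7\<close>
   \<and> vc C (wl C S mu) (vc C (wr C nu T) (vc C (wl C S lam) (wr C sigma S))) = wl C S eta"

definition mixed_opwreath :: "('o, 'm, 'c, 'x) two_cat_scheme \<Rightarrow> 'o \<Rightarrow> 'm \<Rightarrow> 'c \<Rightarrow> 'c \<Rightarrow>
    'm \<Rightarrow> 'c \<Rightarrow> 'c \<Rightarrow> 'c \<Rightarrow> bool" where
  "mixed_opwreath C A T mu eta G zeta delta eps \<longleftrightarrow>
     endo C A G
   \<and> cell_in C zeta (cmp C G T) (cmp C T G)
   \<and> cell_in C delta G (cmp C T (cmp C G G))
   \<and> cell_in C eps G T
   \<comment> \<open>M1\<close>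
   \<and> vc C zeta (wl C G mu) = vc C (wr C mu G) (vc C (wl C T zeta) (wr C zeta T))
   \<comment> \<open>M2\<close>
   \<and> vc C zeta (wl C G eta) = wr C eta G
   \<comment> \<open>M3\<close>
   \<and> vc C mu (wr C eps T) = vc C mu (vc C (wl C T eps) zeta)
   \<comment> \<open>M4\<close>
   \<and> vc C (wr C mu (cmp C G G)) (vc C (wl C T (wr C zeta G))
        (vc C (wl C (cmp C T G) zeta) (wr C delta T)))
       = vc C (wr C mu (cmp C G G)) (vc C (wl C T delta) zeta)
   \<comment> \<open>M5\<close>
   \<and> vc C (wr C mu (cmp C G (cmp C G G))) (vc C (wl C T (wr C delta G)) delta)
       = vc C (wr C mu (cmp C G (cmp C G G))) (vc C (wl C T (wr C zeta (cmp C G G)))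
           (vc C (wl C (cmp C T G) delta) delta))
   \<comment> \<open>M6\<close>
   \<and> vc C (wr C mu G) (vc C (wl C T (wr C eps G)) delta) = wr C eta G
   \<comment> \<open>M7\<close>
   \<and> vc C (wr C mu G) (vc C (wl C T zeta) (vc C (wl C (cmp C T G) eps) delta)) = wr C eta G"

definition mate_zeta :: "('o, 'm, 'c, 'x) two_cat_scheme \<Rightarrow> 'm \<Rightarrow> 'm \<Rightarrow> 'c \<Rightarrow> 'c \<Rightarrow> 'c \<Rightarrow> 'c" where
  "mate_zeta C T G u e lam =
     vc C (wr C e (cmp C T G)) (vc C (wl C G (wr C lam G)) (wl C (cmp C G T) u))"

definition mate_delta :: "('o, 'm, 'c, 'x) two_cat_scheme \<Rightarrow> 'm \<Rightarrow> 'm \<Rightarrow> 'm \<Rightarrow> 'c \<Rightarrow> 'c \<Rightarrow> 'c \<Rightarrow> 'c" where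
  "mate_delta C T G S u e nu =
     vc C (wr C e (cmp C T (cmp C G G)))
       (vc C (wl C G (wr C nu (cmp C G G)))
         (vc C (wl C (cmp C G S) (wr C u G)) (wl C G u)))"

definition mate_eps :: "('o, 'm, 'c, 'x) two_cat_scheme \<Rightarrow> 'm \<Rightarrow> 'm \<Rightarrow> 'c \<Rightarrow> 'c \<Rightarrow> 'c" where
  "mate_eps C T G e sigma = vc C (wr C e T) (wl C G sigma)"

end

theory Submission
  imports Defs
begin

locale tc =
  fixes C :: "('o, 'm, 'c) two_cat" and A :: 'o
  assumes TC: "two_category C" and Aob: "A \<in> ob C"
begin

abbreviation E where "E X \<equiv> endo C A X"
abbreviation one ("\<one>") where "\<one> \<equiv> idm C A"
definition good where "good a \<longleftrightarrow> a \<in> cell C \<and> E (dom2 C a) \<and> E (cod2 C a)"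

lemmas TC' = TC[unfolded two_category_def]
lemmas c_idm = TC'[THEN conjunct1]
lemmas c_homst = TC'[THEN conjunct2, THEN conjunct1]
lemmas c_cmp = TC'[THEN conjunct2, THEN conjunct2, THEN conjunct1]
lemmas c_cmpassoc = TC'[THEN conjunct2, THEN conjunct2, THEN conjunct2, THEN conjunct1]
lemmas c_cmpunit = TC'[THEN conjunct2, THEN conjunct2, THEN conjunct2, THEN conjunct2, THEN conjunct1]
lemmas c_cell = TC'[THEN conjunct2, THEN conjunct2, THEN conjunct2, THEN conjunct2, THEN conjunct2, THEN conjunct1]
lemmas c_idc = TC'[THEN conjunct2, THEN conjunct2, THEN conjunct2, THEN conjunct2, THEN conjunct2, THEN conjunct2, THEN conjunct1]
lemmas c_vc = TC'[THEN conjunct2, THEN conjunct2, THEN conjunct2, THEN conjunct2, THEN conjunct2, THEN conjunct2, THEN conjunct2, THEN conjunct1]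
lemmas c_vcassoc = TC'[THEN conjunct2, THEN conjunct2, THEN conjunct2, THEN conjunct2, THEN conjunct2, THEN conjunct2, THEN conjunct2, THEN conjunct2, THEN conjunct1]
lemmas c_vcunit = TC'[THEN conjunct2, THEN conjunct2, THEN conjunct2, THEN conjunct2, THEN conjunct2, THEN conjunct2, THEN conjunct2, THEN conjunct2, THEN conjunct2, THEN conjunct1]
lemmas c_hc = TC'[THEN conjunct2, THEN conjunct2, THEN conjunct2, THEN conjunct2, THEN conjunct2, THEN conjunct2, THEN conjunct2, THEN conjunct2, THEN conjunct2, THEN conjunct2, THEN conjunct1]
lemmas c_hcassoc = TC'[THEN conjunct2, THEN conjunct2, THEN conjunct2, THEN conjunct2, THEN conjunct2, THEN conjunct2, THEN conjunct2, THEN conjunct2, THEN conjunct2, THEN conjunct2, THEN conjunct2, THEN conjunct1]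
lemmas c_hcunit = TC'[THEN conjunct2, THEN conjunct2, THEN conjunct2, THEN conjunct2, THEN conjunct2, THEN conjunct2, THEN conjunct2, THEN conjunct2, THEN conjunct2, THEN conjunct2, THEN conjunct2, THEN conjunct2, THEN conjunct1]
lemmas c_hcid = TC'[THEN conjunct2, THEN conjunct2, THEN conjunct2, THEN conjunct2, THEN conjunct2, THEN conjunct2, THEN conjunct2, THEN conjunct2, THEN conjunct2, THEN conjunct2, THEN conjunct2, THEN conjunct2, THEN conjunct2, THEN conjunct1]
lemmas c_inter = TC'[THEN conjunct2, THEN conjunct2, THEN conjunct2, THEN conjunct2, THEN conjunct2, THEN conjunct2, THEN conjunct2, THEN conjunct2, THEN conjunct2, THEN conjunct2, THEN conjunct2, THEN conjunct2, THEN conjunct2, THEN conjunct2]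

lemma E_one[simp]: "E \<one>"
  using c_idm Aob unfolding endo_def by blast

lemma E_cmp[simp]: "E X \<Longrightarrow> E Y \<Longrightarrow> E (cmp C X Y)"
  using c_cmp unfolding endo_def by metis

lemma cmp_assoc[simp]: "E X \<Longrightarrow> E Y \<Longrightarrow> E Z \<Longrightarrow> cmp C (cmp C X Y) Z = cmp C X (cmp C Y Z)"
  using c_cmpassoc unfolding endo_def by metis

lemma cmp_one_left[simp]: "E X \<Longrightarrow> cmp C \<one> X = X"
  using c_cmpunit unfolding endo_def by metis

lemma cmp_one_right[simp]: "E X \<Longrightarrow> cmp C X \<one> = X"
  using c_cmpunit unfolding endo_def by metis

lemma good_id[simp]: "E X \<Longrightarrow> good (idc C X)"
  and dom_id[simp]: "E X \<Longrightarrow> dom2 C (idc C X) = X"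
  and cod_id[simp]: "E X \<Longrightarrow> cod2 C (idc C X) = X"
  using c_idc unfolding good_def endo_def by auto

lemma good_vc[simp]: "good a \<Longrightarrow> good b \<Longrightarrow> dom2 C a = cod2 C b \<Longrightarrow> good (vc C a b)"
  and dom_vc[simp]: "good a \<Longrightarrow> good b \<Longrightarrow> dom2 C a = cod2 C b \<Longrightarrow> dom2 C (vc C a b) = dom2 C b"
  and cod_vc[simp]: "good a \<Longrightarrow> good b \<Longrightarrow> dom2 C a = cod2 C b \<Longrightarrow> cod2 C (vc C a b) = cod2 C a"
  using c_vc unfolding good_def by auto

lemma vc_assoc[simp]: "good a \<Longrightarrow> good b \<Longrightarrow> good c \<Longrightarrow> dom2 C a = cod2 C b \<Longrightarrow> dom2 C b = cod2 C c
   \<Longrightarrow> vc C (vc C a b) c = vc C a (vc C b c)"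
  using c_vcassoc unfolding good_def by blast

lemma vc_id_left[simp]: "good a \<Longrightarrow> cod2 C a = X \<Longrightarrow> vc C (idc C X) a = a"
  and vc_id_right[simp]: "good a \<Longrightarrow> dom2 C a = X \<Longrightarrow> vc C a (idc C X) = a"
  using c_vcunit unfolding good_def by auto

lemma good_hc: "good a \<Longrightarrow> good b \<Longrightarrow> good (hc C a b)"
  and dom_hc: "good a \<Longrightarrow> good b \<Longrightarrow> dom2 C (hc C a b) = cmp C (dom2 C a) (dom2 C b)"
  and cod_hc: "good a \<Longrightarrow> good b \<Longrightarrow> cod2 C (hc C a b) = cmp C (cod2 C a) (cod2 C b)"
proof -
  have h: "\<And>a b. good a \<Longrightarrow> good b \<Longrightarrow> hc C a b \<in> cell C \<and> dom2 C (hc C a b) = cmp C (dom2 C a) (dom2 C b)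
        \<and> cod2 C (hc C a b) = cmp C (cod2 C a) (cod2 C b)"
  proof -
    fix a b assume "good a" "good b"
    then show "?thesis a b" using c_hc unfolding good_def endo_def by auto
  qed
  show "good a \<Longrightarrow> good b \<Longrightarrow> good (hc C a b)" using h unfolding good_def by auto
  show "good a \<Longrightarrow> good b \<Longrightarrow> dom2 C (hc C a b) = cmp C (dom2 C a) (dom2 C b)" using h by auto
  show "good a \<Longrightarrow> good b \<Longrightarrow> cod2 C (hc C a b) = cmp C (cod2 C a) (cod2 C b)" using h by auto
qed

lemma hc_assoc: "good a \<Longrightarrow> good b \<Longrightarrow> good c \<Longrightarrow> hc C (hc C a b) c = hc C a (hc C b c)"
  using c_hcassoc unfolding good_def endo_def by auto

lemma hc_one_left: "good a \<Longrightarrow> hc C (idc C \<one>) a = a"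
  and hc_one_right: "good a \<Longrightarrow> hc C a (idc C \<one>) = a"
  using c_hcunit unfolding good_def endo_def by auto

lemma hc_id_id: "E X \<Longrightarrow> E Y \<Longrightarrow> hc C (idc C X) (idc C Y) = idc C (cmp C X Y)"
  using c_hcid unfolding endo_def by auto

lemma interchange: "good a \<Longrightarrow> good a' \<Longrightarrow> good b \<Longrightarrow> good b' \<Longrightarrow> dom2 C a = cod2 C a' \<Longrightarrow> dom2 C b = cod2 C b'
  \<Longrightarrow> hc C (vc C a a') (vc C b b') = vc C (hc C a b) (hc C a' b')"
  using c_inter unfolding good_def endo_def by auto

lemma good_wl[simp]: "E X \<Longrightarrow> good a \<Longrightarrow> good (wl C X a)"
  and dom_wl[simp]: "E X \<Longrightarrow> good a \<Longrightarrow> dom2 C (wl C X a) = cmp C X (dom2 C a)"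
  and cod_wl[simp]: "E X \<Longrightarrow> good a \<Longrightarrow> cod2 C (wl C X a) = cmp C X (cod2 C a)"
  unfolding wl_def by (simp_all add: good_hc dom_hc cod_hc)

lemma good_wr[simp]: "E X \<Longrightarrow> good a \<Longrightarrow> good (wr C a X)"
  and dom_wr[simp]: "E X \<Longrightarrow> good a \<Longrightarrow> dom2 C (wr C a X) = cmp C (dom2 C a) X"
  and cod_wr[simp]: "E X \<Longrightarrow> good a \<Longrightarrow> cod2 C (wr C a X) = cmp C (cod2 C a) X"
  unfolding wr_def by (simp_all add: good_hc dom_hc cod_hc)

lemma good_E: "good a \<Longrightarrow> E (dom2 C a)" "good a \<Longrightarrow> E (cod2 C a)"
  unfolding good_def by auto

lemma wl_vc[simp]: "E X \<Longrightarrow> good a \<Longrightarrow> good b \<Longrightarrow> dom2 C a = cod2 C b \<Longrightarrow>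
   wl C X (vc C a b) = vc C (wl C X a) (wl C X b)"
  unfolding wl_def using interchange[of "idc C X" "idc C X" a b] by (simp add: good_E)

lemma wr_vc[simp]: "E X \<Longrightarrow> good a \<Longrightarrow> good b \<Longrightarrow> dom2 C a = cod2 C b \<Longrightarrow>
   wr C (vc C a b) X = vc C (wr C a X) (wr C b X)"
  unfolding wr_def using interchange[of a b "idc C X" "idc C X"] by (simp add: good_E)

lemma wl_wl[simp]: "E X \<Longrightarrow> E Y \<Longrightarrow> good a \<Longrightarrow> wl C X (wl C Y a) = wl C (cmp C X Y) a"
  unfolding wl_def by (simp add: hc_assoc[symmetric] hc_id_id)

lemma wr_wr[simp]: "E X \<Longrightarrow> E Y \<Longrightarrow> good a \<Longrightarrow> wr C (wr C a X) Y = wr C a (cmp C X Y)"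
  unfolding wr_def by (simp add: hc_assoc hc_id_id)

lemma wr_wl[simp]: "E X \<Longrightarrow> E Y \<Longrightarrow> good a \<Longrightarrow> wr C (wl C X a) Y = wl C X (wr C a Y)"
  unfolding wr_def wl_def by (simp add: hc_assoc)

lemma wl_one[simp]: "good a \<Longrightarrow> wl C \<one> a = a"
  and wr_one[simp]: "good a \<Longrightarrow> wr C a \<one> = a"
  unfolding wl_def wr_def by (simp_all add: hc_one_left hc_one_right)

lemma wl_id[simp]: "E X \<Longrightarrow> E Y \<Longrightarrow> wl C X (idc C Y) = idc C (cmp C X Y)"
  and wr_id[simp]: "E X \<Longrightarrow> E Y \<Longrightarrow> wr C (idc C Y) X = idc C (cmp C Y X)"
  unfolding wl_def wr_def by (simp_all add: hc_id_id)

lemma ic: "good a \<Longrightarrow> good b \<Longrightarrow>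
  vc C (wr C a (cod2 C b)) (wl C (dom2 C a) b) = vc C (wl C (cod2 C a) b) (wr C a (dom2 C b))"
proof -
  assume a: "good a" and b: "good b"
  have "hc C a b = vc C (wr C a (cod2 C b)) (wl C (dom2 C a) b)"
    unfolding wl_def wr_def using a b interchange[of a "idc C (dom2 C a)" "idc C (cod2 C b)" b] by (simp add: good_E)
  moreover have "hc C a b = vc C (wl C (cod2 C a) b) (wr C a (dom2 C b))"
    unfolding wl_def wr_def using a b interchange[of "idc C (cod2 C a)" a b "idc C (dom2 C b)"] by (simp add: good_E)
  ultimately show ?thesis by simp
qed

lemma ic_ctx: "good a \<Longrightarrow> good b \<Longrightarrow> good r \<Longrightarrow> cod2 C r = cmp C (dom2 C a) (dom2 C b) \<Longrightarrow>
  vc C (wr C a (cod2 C b)) (vc C (wl C (dom2 C a) b) r) = vc C (wl C (cod2 C a) b) (vc C (wr C a (dom2 C b)) r)"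
proof -
  assume *: "good a" "good b" "good r" "cod2 C r = cmp C (dom2 C a) (dom2 C b)"
  hence "vc C (vc C (wr C a (cod2 C b)) (wl C (dom2 C a) b)) r = vc C (vc C (wl C (cod2 C a) b) (wr C a (dom2 C b))) r"
    by (simp add: ic)
  thus ?thesis using * by (simp add: good_E)
qed

end

context tc begin
abbreviation cm (infixr "\<cdot>" 75) where "X \<cdot> Y \<equiv> cmp C X Y"
abbreviation v (infixr "\<bullet>" 55) where "a \<bullet> b \<equiv> vc C a b"
abbreviation lw where "lw X a \<equiv> wl C X a"
abbreviation rw where "rw a X \<equiv> wr C a X"
abbreviation i where "i X \<equiv> idc C X"
definition ty where "ty a X Y \<longleftrightarrow> good a \<and> dom2 C a = X \<and> cod2 C a = Y"



lemma ctx: "x \<bullet> y = z \<Longrightarrow> good x \<Longrightarrow> good y \<Longrightarrow> good r \<Longrightarrow> dom2 C x = cod2 C y \<Longrightarrow> cod2 C r = dom2 C y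
   \<Longrightarrow> x \<bullet> y \<bullet> r = z \<bullet> r"
  by (metis vc_assoc)

end

locale setting = tc +
  fixes T mu eta G S u e
  assumes mon: "monad C A T mu eta" and adj: "adjunction C A G S u e"
begin

lemma ET[simp]: "E T" and EG[simp]: "E G" and ES[simp]: "E S"
  using mon adj unfolding monad_def adjunction_def by auto

lemma mu_ty[simp]: "good mu" "dom2 C mu = T \<cdot> T" "cod2 C mu = T"
  and eta_ty[simp]: "good eta" "dom2 C eta = \<one>" "cod2 C eta = T"
  and u_ty[simp]: "good u" "dom2 C u = \<one>" "cod2 C u = S \<cdot> G"
  and e_ty[simp]: "good e" "dom2 C e = G \<cdot> S" "cod2 C e = \<one>"
  using mon adj unfolding monad_def adjunction_def cell_in_def good_def by auto

lemma tri1: "rw e G \<bullet> lw G u = i G" and tri2: "lw S e \<bullet> rw u S = i S"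
  using adj unfolding adjunction_def by auto

lemma tri2w: "E X \<Longrightarrow> E Y \<Longrightarrow> lw (X \<cdot> S) (rw e Y) \<bullet> lw X (rw u (S \<cdot> Y)) = i (X \<cdot> S \<cdot> Y)"
proof -
  assume "E X" "E Y"
  hence "lw X (rw (lw S e \<bullet> rw u S) Y) = i (X \<cdot> S \<cdot> Y)" by (simp add: tri2)
  thus ?thesis using \<open>E X\<close> \<open>E Y\<close> by simp
qed

lemma tri1w: "E X \<Longrightarrow> E Y \<Longrightarrow> lw X (rw e (G \<cdot> Y)) \<bullet> lw (X \<cdot> G) (rw u Y) = i (X \<cdot> G \<cdot> Y)"
proof -
  assume "E X" "E Y"
  hence "lw X (rw (rw e G \<bullet> lw G u) Y) = i (X \<cdot> G \<cdot> Y)" by (simp add: tri1)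
  thus ?thesis using \<open>E X\<close> \<open>E Y\<close> by simp
qed

definition Lam where "Lam Y \<phi> = rw e Y \<bullet> lw G \<phi>"
definition Pt where "Pt P \<psi> = rw \<psi> G \<bullet> lw P u"
definition LamI where "LamI X \<psi> = lw S \<psi> \<bullet> rw u X"
definition PtI where "PtI Q \<chi> = lw Q e \<bullet> rw \<chi> S"

declare good_E[simp]

lemma icw: "E X \<Longrightarrow> E Y \<Longrightarrow> good a \<Longrightarrow> good b \<Longrightarrow>
  lw X (rw (rw a (cod2 C b)) Y) \<bullet> lw X (rw (lw (dom2 C a) b) Y) = lw X (rw (lw (cod2 C a) b) Y) \<bullet> lw X (rw (rw a (dom2 C b)) Y)"
proof -
  assume *: "E X" "E Y" "good a" "good b"
  hence "lw X (rw (rw a (cod2 C b) \<bullet> lw (dom2 C a) b) Y) = lw X (rw (lw (cod2 C a) b \<bullet> rw a (dom2 C b)) Y)"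
    using ic by simp
  thus ?thesis using * by simp
qed

lemma Lam_good[simp]: "good \<phi> \<Longrightarrow> E Y \<Longrightarrow> cod2 C \<phi> = S \<cdot> Y \<Longrightarrow> good (Lam Y \<phi>)"
  and Lam_dom[simp]: "good \<phi> \<Longrightarrow> E Y \<Longrightarrow> cod2 C \<phi> = S \<cdot> Y \<Longrightarrow> dom2 C (Lam Y \<phi>) = G \<cdot> dom2 C \<phi>"
  and Lam_cod[simp]: "good \<phi> \<Longrightarrow> E Y \<Longrightarrow> cod2 C \<phi> = S \<cdot> Y \<Longrightarrow> cod2 C (Lam Y \<phi>) = Y"
  unfolding Lam_def by (simp_all add: good_E)

lemma Pt_good[simp]: "good \<psi> \<Longrightarrow> E P \<Longrightarrow> dom2 C \<psi> = P \<cdot> S \<Longrightarrow> good (Pt P \<psi>)"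
  and Pt_dom[simp]: "good \<psi> \<Longrightarrow> E P \<Longrightarrow> dom2 C \<psi> = P \<cdot> S \<Longrightarrow> dom2 C (Pt P \<psi>) = P"
  and Pt_cod[simp]: "good \<psi> \<Longrightarrow> E P \<Longrightarrow> dom2 C \<psi> = P \<cdot> S \<Longrightarrow> cod2 C (Pt P \<psi>) = cod2 C \<psi> \<cdot> G"
  unfolding Pt_def by (simp_all add: good_E)

lemma LamI_good[simp]: "good \<psi> \<Longrightarrow> E X \<Longrightarrow> dom2 C \<psi> = G \<cdot> X \<Longrightarrow> good (LamI X \<psi>)"
  and LamI_dom[simp]: "good \<psi> \<Longrightarrow> E X \<Longrightarrow> dom2 C \<psi> = G \<cdot> X \<Longrightarrow> dom2 C (LamI X \<psi>) = X"
  and LamI_cod[simp]: "good \<psi> \<Longrightarrow> E X \<Longrightarrow> dom2 C \<psi> = G \<cdot> X \<Longrightarrow> cod2 C (LamI X \<psi>) = S \<cdot> cod2 C \<psi>"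
  unfolding LamI_def by (simp_all add: good_E)

lemma PtI_good[simp]: "good \<chi> \<Longrightarrow> E Q \<Longrightarrow> cod2 C \<chi> = Q \<cdot> G \<Longrightarrow> good (PtI Q \<chi>)"
  and PtI_dom[simp]: "good \<chi> \<Longrightarrow> E Q \<Longrightarrow> cod2 C \<chi> = Q \<cdot> G \<Longrightarrow> dom2 C (PtI Q \<chi>) = dom2 C \<chi> \<cdot> S"
  and PtI_cod[simp]: "good \<chi> \<Longrightarrow> E Q \<Longrightarrow> cod2 C \<chi> = Q \<cdot> G \<Longrightarrow> cod2 C (PtI Q \<chi>) = Q"
  unfolding PtI_def by (simp_all add: good_E)


lemma LamI_Lam: "good \<phi> \<Longrightarrow> cod2 C \<phi> = S \<cdot> Y \<Longrightarrow> E Y \<Longrightarrow> LamI (dom2 C \<phi>) (Lam Y \<phi>) = \<phi>"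
  unfolding LamI_def Lam_def
  using ic[of u \<phi>, symmetric] tri2w[of \<one> Y] ctx[OF tri2w[of \<one> Y]]
  by simp

lemma Lam_LamI: "good \<psi> \<Longrightarrow> dom2 C \<psi> = G \<cdot> X \<Longrightarrow> E X \<Longrightarrow> Lam (cod2 C \<psi>) (LamI X \<psi>) = \<psi>"
  unfolding LamI_def Lam_def
  using ic[of e \<psi>] ctx[OF ic[of e \<psi>]] tri1w[of \<one> X] ctx[OF tri1w[of \<one> X]]
  by simp

lemma Pt_PtI: "good \<chi> \<Longrightarrow> cod2 C \<chi> = Q \<cdot> G \<Longrightarrow> E Q \<Longrightarrow> Pt (dom2 C \<chi>) (PtI Q \<chi>) = \<chi>"
  unfolding Pt_def PtI_def
  using ic[of \<chi> u] ctx[OF ic[of \<chi> u]] tri1w[of Q \<one>] ctx[OF tri1w[of Q \<one>]]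
  by simp

lemma PtI_Pt: "good \<psi> \<Longrightarrow> dom2 C \<psi> = P \<cdot> S \<Longrightarrow> E P \<Longrightarrow> PtI (cod2 C \<psi>) (Pt P \<psi>) = \<psi>"
  unfolding Pt_def PtI_def
  using ic[of \<psi> e, symmetric] ctx[OF ic[of \<psi> e, symmetric]] tri2w[of P \<one>] ctx[OF tri2w[of P \<one>]]
  by simp

lemma Lam_inj: "good a \<Longrightarrow> good b \<Longrightarrow> cod2 C a = S \<cdot> Y \<Longrightarrow> cod2 C b = S \<cdot> Y \<Longrightarrow> dom2 C a = dom2 C b \<Longrightarrow> E Y
   \<Longrightarrow> Lam Y a = Lam Y b \<Longrightarrow> a = b"
  by (metis LamI_Lam)

lemma Pt_inj: "good a \<Longrightarrow> good b \<Longrightarrow> dom2 C a = P \<cdot> S \<Longrightarrow> dom2 C b = P \<cdot> S \<Longrightarrow> cod2 C a = cod2 C b \<Longrightarrow> E P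
   \<Longrightarrow> Pt P a = Pt P b \<Longrightarrow> a = b"
  by (metis PtI_Pt)

lemma Lam_nat_out: "good \<alpha> \<Longrightarrow> good \<phi> \<Longrightarrow> cod2 C \<phi> = S \<cdot> dom2 C \<alpha> \<Longrightarrow>
   Lam (cod2 C \<alpha>) (lw S \<alpha> \<bullet> \<phi>) = \<alpha> \<bullet> Lam (dom2 C \<alpha>) \<phi>"
  unfolding Lam_def using ic[of e \<alpha>] ctx[OF ic[of e \<alpha>]] by simp

lemma Lam_comp: "good \<phi> \<Longrightarrow> good \<beta> \<Longrightarrow> dom2 C \<phi> = cod2 C \<beta> \<Longrightarrow> E Y \<Longrightarrow> cod2 C \<phi> = S \<cdot> Y \<Longrightarrow>
   Lam Y (\<phi> \<bullet> \<beta>) = Lam Y \<phi> \<bullet> lw G \<beta>"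
  unfolding Lam_def by simp

lemma Lam_wr: "good \<phi> \<Longrightarrow> E Y \<Longrightarrow> E Z \<Longrightarrow> cod2 C \<phi> = S \<cdot> Y \<Longrightarrow>
   Lam (Y \<cdot> Z) (rw \<phi> Z) = rw (Lam Y \<phi>) Z"
  unfolding Lam_def by simp

lemma Pt_comp: "good \<psi> \<Longrightarrow> good \<beta> \<Longrightarrow> dom2 C \<beta> = cod2 C \<psi> \<Longrightarrow> E P \<Longrightarrow> dom2 C \<psi> = P \<cdot> S \<Longrightarrow>
   Pt P (\<beta> \<bullet> \<psi>) = rw \<beta> G \<bullet> Pt P \<psi>"
  unfolding Pt_def by simp

lemma Pt_nat_in: "good \<psi> \<Longrightarrow> good \<alpha> \<Longrightarrow> dom2 C \<psi> = cod2 C \<alpha> \<cdot> S \<Longrightarrow>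
   Pt (dom2 C \<alpha>) (\<psi> \<bullet> rw \<alpha> S) = Pt (cod2 C \<alpha>) \<psi> \<bullet> \<alpha>"
  unfolding Pt_def using ic[of \<alpha> u] by simp

lemma Pt_wl: "good \<psi> \<Longrightarrow> E X \<Longrightarrow> E P \<Longrightarrow> dom2 C \<psi> = P \<cdot> S \<Longrightarrow>
   Pt (X \<cdot> P) (lw X \<psi>) = lw X (Pt P \<psi>)"
  unfolding Pt_def by simp

lemma Pt_e: "Pt G e = i G"
  unfolding Pt_def using tri1 by simp

lemma Lam_e: "Lam \<one> (i S) = e"
  unfolding Lam_def by simp

lemma SL0: "good \<chi> \<Longrightarrow> good \<phi> \<Longrightarrow> E X' \<Longrightarrow> E Y \<Longrightarrow> E Z \<Longrightarrow> dom2 C \<chi> = G \<cdot> X' \<Longrightarrow> cod2 C \<chi> = Y \<cdot> G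
  \<Longrightarrow> cod2 C \<phi> = S \<cdot> Z \<Longrightarrow> L = lw Y e \<bullet> rw \<chi> S \<Longrightarrow>
  rw L Z \<bullet> lw (G \<cdot> X') \<phi> = lw Y (Lam Z \<phi>) \<bullet> rw \<chi> (dom2 C \<phi>)"
  unfolding Lam_def using ic[of \<chi> \<phi>] by simp

lemma SL: "good \<psi> \<Longrightarrow> good \<phi> \<Longrightarrow> E X' \<Longrightarrow> E Y \<Longrightarrow> E Z \<Longrightarrow> dom2 C \<psi> = X' \<cdot> S \<Longrightarrow> cod2 C \<psi> = S \<cdot> Y
  \<Longrightarrow> cod2 C \<phi> = S \<cdot> Z \<Longrightarrow>
  Lam (Y \<cdot> Z) (rw \<psi> Z \<bullet> lw X' \<phi>) = lw Y (Lam Z \<phi>) \<bullet> rw (Pt (G \<cdot> X') (Lam Y \<psi>)) (dom2 C \<phi>)"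
proof -
  assume *: "good \<psi>" "good \<phi>" "E X'" "E Y" "E Z" "dom2 C \<psi> = X' \<cdot> S" "cod2 C \<psi> = S \<cdot> Y" "cod2 C \<phi> = S \<cdot> Z"
  have L: "Lam Y \<psi> = PtI Y (Pt (G \<cdot> X') (Lam Y \<psi>))"
    using PtI_Pt[of "Lam Y \<psi>" "G \<cdot> X'"] * by simp
  have "Lam (Y \<cdot> Z) (rw \<psi> Z \<bullet> lw X' \<phi>) = rw (Lam Y \<psi>) Z \<bullet> lw (G \<cdot> X') \<phi>"
    using * unfolding Lam_def by simp
  also have "\<dots> = lw Y (Lam Z \<phi>) \<bullet> rw (Pt (G \<cdot> X') (Lam Y \<psi>)) (dom2 C \<phi>)"
    by (rule SL0) (use * L in \<open>simp_all add: PtI_def\<close>)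
  finally show ?thesis .
qed

lemma VP0: "good \<alpha> \<Longrightarrow> good \<sigma> \<Longrightarrow> E X \<Longrightarrow> E Z \<Longrightarrow> dom2 C \<alpha> = X \<cdot> S \<Longrightarrow> dom2 C \<sigma> = \<one> \<Longrightarrow> cod2 C \<sigma> = S \<cdot> Z \<Longrightarrow>
  lw (cod2 C \<alpha>) (Lam Z \<sigma>) \<bullet> Pt X \<alpha> = rw \<alpha> Z \<bullet> lw X \<sigma>"
  unfolding Lam_def Pt_def
  using ic[of \<alpha> "lw G \<sigma>", symmetric] ctx[OF ic[of \<alpha> "lw G \<sigma>", symmetric]]
    ic[of \<alpha> "rw e Z", symmetric] ctx[OF ic[of \<alpha> "rw e Z", symmetric]]
    icw[of X \<one> u \<sigma>, symmetric] tri2w[of X Z] ctx[OF tri2w[of X Z]]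
  by simp

lemma VP1: "good \<alpha> \<Longrightarrow> good lm \<Longrightarrow> E X \<Longrightarrow> E Z \<Longrightarrow> E W \<Longrightarrow> dom2 C \<alpha> = X \<cdot> S \<Longrightarrow> dom2 C lm = W \<cdot> S
  \<Longrightarrow> cod2 C lm = S \<cdot> Z \<Longrightarrow>
  Pt (X \<cdot> W) (rw \<alpha> Z \<bullet> lw X lm) = lw (cod2 C \<alpha>) (Pt (G \<cdot> W) (Lam Z lm)) \<bullet> rw (Pt X \<alpha>) W"
  unfolding Lam_def Pt_def
  using ic[of \<alpha> "lw (G \<cdot> W) u", symmetric] ctx[OF ic[of \<alpha> "lw (G \<cdot> W) u", symmetric]]
    ic[of \<alpha> "lw G (rw lm G)", symmetric] ctx[OF ic[of \<alpha> "lw G (rw lm G)", symmetric]]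
    ic[of \<alpha> "rw e (Z \<cdot> G)", symmetric] ctx[OF ic[of \<alpha> "rw e (Z \<cdot> G)", symmetric]]
    icw[of X \<one> u "lw W u", symmetric] 
    icw[of X \<one> u "rw lm G", symmetric] ctx[OF icw[of X \<one> u "rw lm G", symmetric]]
    tri2w[of X "Z \<cdot> G"] ctx[OF tri2w[of X "Z \<cdot> G"]]
  by simp

end

locale cells = setting +
  fixes nu sigma lam
  assumes nu_ty[simp]: "good nu" "dom2 C nu = S \<cdot> S" "cod2 C nu = S \<cdot> T"
  and sigma_ty[simp]: "good sigma" "dom2 C sigma = \<one>" "cod2 C sigma = S \<cdot> T"
  and lam_ty[simp]: "good lam" "dom2 C lam = T \<cdot> S" "cod2 C lam = S \<cdot> T"
begin

abbreviation "l \<equiv> Lam T lam"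
abbreviation "nn \<equiv> Lam T nu"
abbreviation "Z \<equiv> Pt (G \<cdot> T) l"
abbreviation "d1 \<equiv> Pt (G \<cdot> S) nn"
abbreviation "D \<equiv> Pt G d1"
abbreviation "ep \<equiv> Lam T sigma"

lemma iff0: "Lam T x = a \<Longrightarrow> Lam T y = b \<Longrightarrow> good x \<Longrightarrow> good y \<Longrightarrow> dom2 C x = dom2 C y \<Longrightarrow>
   cod2 C x = S \<cdot> T \<Longrightarrow> cod2 C y = S \<cdot> T \<Longrightarrow> (x = y \<longleftrightarrow> a = b)"
  using Lam_inj[of x y T] by auto

lemma iff1: "Pt P (Lam T x) = a \<Longrightarrow> Pt P (Lam T y) = b \<Longrightarrow> good x \<Longrightarrow> good y \<Longrightarrow> dom2 C x = dom2 C y \<Longrightarrow>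
   cod2 C x = S \<cdot> T \<Longrightarrow> cod2 C y = S \<cdot> T \<Longrightarrow> E P \<Longrightarrow> G \<cdot> dom2 C x = P \<cdot> S \<Longrightarrow> (x = y \<longleftrightarrow> a = b)"
proof -
  assume *: "Pt P (Lam T x) = a" "Pt P (Lam T y) = b" "good x" "good y" "dom2 C x = dom2 C y"
   "cod2 C x = S \<cdot> T" "cod2 C y = S \<cdot> T" "E P" "G \<cdot> dom2 C x = P \<cdot> S"
  have "Pt P (Lam T x) = Pt P (Lam T y) \<Longrightarrow> Lam T x = Lam T y"
    by (rule Pt_inj[of _ _ P]) (use * in simp_all)
  thus ?thesis using * iff0[of x "Lam T x" y "Lam T y"] by auto
qed

lemma iff2: "Pt P (Pt Q (Lam T x)) = a \<Longrightarrow> Pt P (Pt Q (Lam T y)) = b \<Longrightarrow> good x \<Longrightarrow> good y \<Longrightarrow> dom2 C x = dom2 C y \<Longrightarrow>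
   cod2 C x = S \<cdot> T \<Longrightarrow> cod2 C y = S \<cdot> T \<Longrightarrow> E P \<Longrightarrow> E Q \<Longrightarrow> G \<cdot> dom2 C x = Q \<cdot> S \<Longrightarrow> Q = P \<cdot> S \<Longrightarrow> (x = y \<longleftrightarrow> a = b)"
proof -
  assume *: "Pt P (Pt Q (Lam T x)) = a" "Pt P (Pt Q (Lam T y)) = b" "good x" "good y" "dom2 C x = dom2 C y"
   "cod2 C x = S \<cdot> T" "cod2 C y = S \<cdot> T" "E P" "E Q" "G \<cdot> dom2 C x = Q \<cdot> S" "Q = P \<cdot> S"
  have "Pt P (Pt Q (Lam T x)) = Pt P (Pt Q (Lam T y)) \<Longrightarrow> Pt Q (Lam T x) = Pt Q (Lam T y)"
    by (rule Pt_inj[of _ _ P]) (use * in simp_all)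
  thus ?thesis using * iff1[of Q x "Pt Q (Lam T x)" y "Pt Q (Lam T y)"] by auto
qed

lemma iff3: "Pt P (Pt Q (Pt R (Lam T x))) = a \<Longrightarrow> Pt P (Pt Q (Pt R (Lam T y))) = b \<Longrightarrow> good x \<Longrightarrow> good y \<Longrightarrow> dom2 C x = dom2 C y \<Longrightarrow>
   cod2 C x = S \<cdot> T \<Longrightarrow> cod2 C y = S \<cdot> T \<Longrightarrow> E P \<Longrightarrow> E Q \<Longrightarrow> E R \<Longrightarrow> G \<cdot> dom2 C x = R \<cdot> S \<Longrightarrow> R = Q \<cdot> S \<Longrightarrow> Q = P \<cdot> S \<Longrightarrow> (x = y \<longleftrightarrow> a = b)"
proof -
  assume *: "Pt P (Pt Q (Pt R (Lam T x))) = a" "Pt P (Pt Q (Pt R (Lam T y))) = b" "good x" "good y" "dom2 C x = dom2 C y"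
   "cod2 C x = S \<cdot> T" "cod2 C y = S \<cdot> T" "E P" "E Q" "E R" "G \<cdot> dom2 C x = R \<cdot> S" "R = Q \<cdot> S" "Q = P \<cdot> S"
  have "Pt P (Pt Q (Pt R (Lam T x))) = Pt P (Pt Q (Pt R (Lam T y))) \<Longrightarrow> Pt Q (Pt R (Lam T x)) = Pt Q (Pt R (Lam T y))"
    by (rule Pt_inj[of _ _ P]) (use * in simp_all)
  thus ?thesis using * iff2[of Q R x "Pt Q (Pt R (Lam T x))" y "Pt Q (Pt R (Lam T y))"] by auto
qed

lemma zeta_eq: "mate_zeta C T G u e lam = Z"
  unfolding mate_zeta_def Pt_def Lam_def by simp
lemma delta_eq: "mate_delta C T G S u e nu = D"
  unfolding mate_delta_def Pt_def Lam_def by simp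
lemma eps_eq: "mate_eps C T G e sigma = ep"
  unfolding mate_eps_def Pt_def Lam_def by simp

lemma m1l: "Pt (G \<cdot> T \<cdot> T) (Lam T (lam \<bullet> rw mu S)) = Z \<bullet> lw G mu"
  using Lam_comp[of lam "rw mu S" T] Pt_nat_in[of l "lw G mu"] by simp

lemma m1r: "Pt (G \<cdot> T \<cdot> T) (Lam T (lw S mu \<bullet> rw lam T \<bullet> lw T lam)) = rw mu G \<bullet> lw T Z \<bullet> rw Z T"
  using Lam_nat_out[of mu "rw lam T \<bullet> lw T lam"] SL[of lam lam T T T]
    Pt_comp[of "lw T l \<bullet> rw Z (T \<cdot> S)" mu "G \<cdot> T \<cdot> T"]
    Pt_nat_in[of "lw T l" "rw Z T"] Pt_wl[of l T "G \<cdot> T"]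
  by simp

lemma m2l: "Pt G (Lam T (lam \<bullet> rw eta S)) = Z \<bullet> lw G eta"
  using Lam_comp[of lam "rw eta S" T] Pt_nat_in[of l "lw G eta"] by simp

lemma m2r: "Pt G (Lam T (lw S eta)) = rw eta G"
  using Lam_nat_out[of eta "i S"] Lam_e Pt_comp[of e eta G] Pt_e by simp

lemma m3l: "Lam T (lw S mu \<bullet> rw lam T \<bullet> lw T sigma) = mu \<bullet> lw T ep \<bullet> Z"
  using Lam_nat_out[of mu "rw lam T \<bullet> lw T sigma"] SL[of lam sigma T T T] by simp

lemma m3r: "Lam T (lw S mu \<bullet> rw sigma T) = mu \<bullet> rw ep T"
  using Lam_nat_out[of mu "rw sigma T"] Lam_wr[of sigma T T] by simp

lemma m4l: "Pt (G \<cdot> T) (Pt (G \<cdot> T \<cdot> S) (Lam T (lw S mu \<bullet> rw nu T \<bullet> lw S lam \<bullet> rw lam S)))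
   = rw mu (G \<cdot> G) \<bullet> lw T (rw Z G) \<bullet> lw (T \<cdot> G) Z \<bullet> rw D T"
  using Lam_nat_out[of mu "rw nu T \<bullet> lw S lam \<bullet> rw lam S"]
    Lam_comp[of "rw nu T \<bullet> lw S lam" "rw lam S" "T \<cdot> T"] SL[of nu lam S T T]
    Pt_comp[of "lw T l \<bullet> rw d1 (T \<cdot> S) \<bullet> lw G (rw lam S)" mu "G \<cdot> T \<cdot> S"]
    Pt_nat_in[of "lw T l \<bullet> rw d1 (T \<cdot> S)" "lw G lam"]
    Pt_nat_in[of "lw T l" "rw d1 T"] Pt_wl[of l T "G \<cdot> T"]
    Pt_comp[of "lw T Z \<bullet> rw d1 T \<bullet> lw G lam" "rw mu G" "G \<cdot> T"]
    Pt_comp[of "rw d1 T \<bullet> lw G lam" "lw T Z" "G \<cdot> T"]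
    VP1[of d1 lam G T T]
  by simp

lemma m4r: "Pt (G \<cdot> T) (Pt (G \<cdot> T \<cdot> S) (Lam T (lw S mu \<bullet> rw lam T \<bullet> lw T nu)))
   = rw mu (G \<cdot> G) \<bullet> lw T D \<bullet> Z"
  using Lam_nat_out[of mu "rw lam T \<bullet> lw T nu"] SL[of lam nu T T T]
    Pt_comp[of "lw T nn \<bullet> rw Z (S \<cdot> S)" mu "G \<cdot> T \<cdot> S"]
    Pt_nat_in[of "lw T nn" "rw Z S"] Pt_wl[of nn T "G \<cdot> S"]
    Pt_comp[of "lw T d1 \<bullet> rw Z S" "rw mu G" "G \<cdot> T"]
    Pt_nat_in[of "lw T d1" Z] Pt_wl[of d1 T G]
  by simp

lemma m5l: "Pt G (Pt (G \<cdot> S) (Pt (G \<cdot> S \<cdot> S) (Lam T (lw S mu \<bullet> rw nu T \<bullet> lw S nu))))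
   = rw mu (G \<cdot> G \<cdot> G) \<bullet> lw T (rw D G) \<bullet> D"
  using Lam_nat_out[of mu "rw nu T \<bullet> lw S nu"] SL[of nu nu S T T]
    Pt_comp[of "lw T nn \<bullet> rw d1 (S \<cdot> S)" mu "G \<cdot> S \<cdot> S"]
    Pt_nat_in[of "lw T nn" "rw d1 S"] Pt_wl[of nn T "G \<cdot> S"]
    Pt_comp[of "lw T d1 \<bullet> rw d1 S" "rw mu G" "G \<cdot> S"]
    Pt_nat_in[of "lw T d1" d1] Pt_wl[of d1 T G]
    Pt_comp[of "lw T D \<bullet> d1" "rw mu (G \<cdot> G)" G] Pt_comp[of d1 "lw T D" G]
  by simp

lemma m5r: "Pt G (Pt (G \<cdot> S) (Pt (G \<cdot> S \<cdot> S) (Lam T (lw S mu \<bullet> rw nu T \<bullet> lw S lam \<bullet> rw nu S))))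
   = rw mu (G \<cdot> G \<cdot> G) \<bullet> lw T (rw Z (G \<cdot> G)) \<bullet> lw (T \<cdot> G) D \<bullet> D"
  using Lam_nat_out[of mu "rw nu T \<bullet> lw S lam \<bullet> rw nu S"]
    Lam_comp[of "rw nu T \<bullet> lw S lam" "rw nu S" "T \<cdot> T"] SL[of nu lam S T T]
    Pt_comp[of "lw T l \<bullet> rw d1 (T \<cdot> S) \<bullet> lw G (rw nu S)" mu "G \<cdot> S \<cdot> S"]
    Pt_nat_in[of "lw T l \<bullet> rw d1 (T \<cdot> S)" "lw G nu"]
    Pt_nat_in[of "lw T l" "rw d1 T"] Pt_wl[of l T "G \<cdot> T"]
    Pt_comp[of "lw T Z \<bullet> rw d1 T \<bullet> lw G nu" "rw mu G" "G \<cdot> S"]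
    Pt_comp[of "rw d1 T \<bullet> lw G nu" "lw T Z" "G \<cdot> S"]
    VP1[of d1 nu G T S]
    Pt_comp[of "lw T (rw Z G) \<bullet> lw (T \<cdot> G) d1 \<bullet> rw D S" "rw mu (G \<cdot> G)" G]
    Pt_comp[of "lw (T \<cdot> G) d1 \<bullet> rw D S" "lw T (rw Z G)" G]
    Pt_nat_in[of "lw (T \<cdot> G) d1" D] Pt_wl[of d1 "T \<cdot> G" G]
  by simp

lemma m6l: "Pt G (Lam T (lw S mu \<bullet> rw nu T \<bullet> lw S sigma)) = rw mu G \<bullet> lw T (rw ep G) \<bullet> D"
  using Lam_nat_out[of mu "rw nu T \<bullet> lw S sigma"] SL[of nu sigma S T T]
    Pt_comp[of "lw T ep \<bullet> d1" mu G] Pt_comp[of d1 "lw T ep" G]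
  by simp

lemma m7l: "Pt G (Lam T (lw S mu \<bullet> rw nu T \<bullet> lw S lam \<bullet> rw sigma S)) = rw mu G \<bullet> lw T Z \<bullet> lw (T \<cdot> G) ep \<bullet> D"
  using Lam_nat_out[of mu "rw nu T \<bullet> lw S lam \<bullet> rw sigma S"]
    Lam_comp[of "rw nu T \<bullet> lw S lam" "rw sigma S" "T \<cdot> T"] SL[of nu lam S T T]
    Pt_comp[of "lw T l \<bullet> rw d1 (T \<cdot> S) \<bullet> lw G (rw sigma S)" mu G]
    Pt_nat_in[of "lw T l \<bullet> rw d1 (T \<cdot> S)" "lw G sigma"]
    Pt_nat_in[of "lw T l" "rw d1 T"] Pt_wl[of l T "G \<cdot> T"]
    VP0[of d1 sigma G T, symmetric]
  by simp

lemma good_cell: "good a \<Longrightarrow> a \<in> cell C" unfolding good_def by simp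

lemma wreath_iff: "wreath C A T mu eta S nu sigma lam \<longleftrightarrow>
  mixed_opwreath C A T mu eta G (mate_zeta C T G u e lam) (mate_delta C T G S u e nu) (mate_eps C T G e sigma)"
proof -
  have i1: "(vc C lam (wr C mu S) = vc C (wl C S mu) (vc C (wr C lam T) (wl C T lam))) \<longleftrightarrow>
     (vc C Z (wl C G mu) = vc C (wr C mu G) (vc C (wl C T Z) (wr C Z T)))"
    by (rule iff1[OF m1l m1r]) simp_all
  have i2: "(vc C lam (wr C eta S) = wl C S eta) \<longleftrightarrow> (vc C Z (wl C G eta) = wr C eta G)"
    by (rule iff1[OF m2l m2r]) simp_all
  have i3: "(vc C (wl C S mu) (vc C (wr C lam T) (wl C T sigma)) = vc C (wl C S mu) (wr C sigma T)) \<longleftrightarrow>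
     (vc C mu (wr C ep T) = vc C mu (vc C (wl C T ep) Z))"
    using iff0[OF m3l m3r] by auto
  have i4: "(vc C (wl C S mu) (vc C (wr C nu T) (vc C (wl C S lam) (wr C lam S)))
       = vc C (wl C S mu) (vc C (wr C lam T) (wl C T nu))) \<longleftrightarrow>
     (vc C (wr C mu (cmp C G G)) (vc C (wl C T (wr C Z G)) (vc C (wl C (cmp C T G) Z) (wr C D T)))
       = vc C (wr C mu (cmp C G G)) (vc C (wl C T D) Z))"
    by (rule iff2[OF m4l m4r]) simp_all
  have i5: "(vc C (wl C S mu) (vc C (wr C nu T) (wl C S nu))
       = vc C (wl C S mu) (vc C (wr C nu T) (vc C (wl C S lam) (wr C nu S)))) \<longleftrightarrow>
     (vc C (wr C mu (cmp C G (cmp C G G))) (vc C (wl C T (wr C D G)) D)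
       = vc C (wr C mu (cmp C G (cmp C G G))) (vc C (wl C T (wr C Z (cmp C G G)))
           (vc C (wl C (cmp C T G) D) D)))"
    by (rule iff3[OF m5l m5r]) simp_all
  have i6: "(vc C (wl C S mu) (vc C (wr C nu T) (wl C S sigma)) = wl C S eta) \<longleftrightarrow>
     (vc C (wr C mu G) (vc C (wl C T (wr C ep G)) D) = wr C eta G)"
    by (rule iff1[OF m6l m2r]) simp_all
  have i7: "(vc C (wl C S mu) (vc C (wr C nu T) (vc C (wl C S lam) (wr C sigma S))) = wl C S eta) \<longleftrightarrow>
     (vc C (wr C mu G) (vc C (wl C T Z) (vc C (wl C (cmp C T G) ep) D)) = wr C eta G)"
    by (rule iff1[OF m7l m2r]) simp_all
  have t1: "endo C A S" "endo C A G" by simp_all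
  have t2: "cell_in C nu (cmp C S S) (cmp C S T)" "cell_in C sigma (idm C A) (cmp C S T)"
    "cell_in C lam (cmp C T S) (cmp C S T)"
    "cell_in C Z (cmp C G T) (cmp C T G)" "cell_in C D G (cmp C T (cmp C G G))" "cell_in C ep G T"
    unfolding cell_in_def by (simp_all add: good_cell)
  show ?thesis
    unfolding wreath_def mixed_opwreath_def zeta_eq delta_eq eps_eq
    using i1 i2 i3 i4 i5 i6 i7 t1 t2 by blast
qed

lemma lam_rec: "LamI (T \<cdot> S) (PtI T (mate_zeta C T G u e lam)) = lam"
  unfolding zeta_eq using PtI_Pt[of l "G \<cdot> T"] LamI_Lam[of lam T] by simp
lemma nu_rec: "LamI (S \<cdot> S) (PtI T (PtI (T \<cdot> G) (mate_delta C T G S u e nu))) = nu"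
  unfolding delta_eq using PtI_Pt[of d1 G] PtI_Pt[of nn "G \<cdot> S"] LamI_Lam[of nu T] by simp
lemma sigma_rec: "LamI \<one> (mate_eps C T G e sigma) = sigma"
  unfolding eps_eq using LamI_Lam[of sigma T] by simp

end

context setting begin

lemma cellsI: "cell_in C nu (S \<cdot> S) (S \<cdot> T) \<Longrightarrow> cell_in C sigma \<one> (S \<cdot> T) \<Longrightarrow> cell_in C lam (T \<cdot> S) (S \<cdot> T)
  \<Longrightarrow> cells C A T mu eta G S u e nu sigma lam"
  by unfold_locales (auto simp: cell_in_def good_def)

lemma cellsI': "good nu \<Longrightarrow> dom2 C nu = S \<cdot> S \<Longrightarrow> cod2 C nu = S \<cdot> T \<Longrightarrow>
  good sigma \<Longrightarrow> dom2 C sigma = \<one> \<Longrightarrow> cod2 C sigma = S \<cdot> T \<Longrightarrow>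
  good lam \<Longrightarrow> dom2 C lam = T \<cdot> S \<Longrightarrow> cod2 C lam = S \<cdot> T
  \<Longrightarrow> cells C A T mu eta G S u e nu sigma lam"
  by unfold_locales auto

lemma wreath_cells: "wreath C A T mu eta S nu sigma lam \<Longrightarrow> cells C A T mu eta G S u e nu sigma lam"
  unfolding wreath_def by (intro cellsI) auto

lemma main: "bij_betw
           (\<lambda>(nu, sigma, lam). (mate_zeta C T G u e lam, mate_delta C T G S u e nu, mate_eps C T G e sigma))
           {(nu, sigma, lam). wreath C A T mu eta S nu sigma lam}
           {(zeta, delta, eps). mixed_opwreath C A T mu eta G zeta delta eps}"
proof (rule bij_betw_imageI)
  show "inj_on (\<lambda>(nu, sigma, lam). (mate_zeta C T G u e lam, mate_delta C T G S u e nu, mate_eps C T G e sigma))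
           {(nu, sigma, lam). wreath C A T mu eta S nu sigma lam}"
  proof (rule inj_onI, clarsimp)
    fix nu sigma lam nu' sigma' lam'
    assume w: "wreath C A T mu eta S nu sigma lam" and w': "wreath C A T mu eta S nu' sigma' lam'"
      and e1: "mate_zeta C T G u e lam = mate_zeta C T G u e lam'"
      and e2: "mate_delta C T G S u e nu = mate_delta C T G S u e nu'"
      and e3: "mate_eps C T G e sigma = mate_eps C T G e sigma'"
    interpret c: cells C A T mu eta G S u e nu sigma lam using wreath_cells[OF w] .
    interpret c': cells C A T mu eta G S u e nu' sigma' lam' using wreath_cells[OF w'] .
    show "nu = nu' \<and> sigma = sigma' \<and> lam = lam'"
      proof (intro conjI)
      show "lam = lam'" using c.lam_rec c'.lam_rec e1 by (metis (no_types))
      show "nu = nu'" using c.nu_rec c'.nu_rec e2 by (metis (no_types))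
      show "sigma = sigma'" using c.sigma_rec c'.sigma_rec e3 by (metis (no_types))
    qed
  qed
next
  show "(\<lambda>(nu, sigma, lam). (mate_zeta C T G u e lam, mate_delta C T G S u e nu, mate_eps C T G e sigma)) `
           {(nu, sigma, lam). wreath C A T mu eta S nu sigma lam} =
           {(zeta, delta, eps). mixed_opwreath C A T mu eta G zeta delta eps}"
  proof (intro set_eqI iffI)
    fix x assume "x \<in> (\<lambda>(nu, sigma, lam). (mate_zeta C T G u e lam, mate_delta C T G S u e nu, mate_eps C T G e sigma)) `
           {(nu, sigma, lam). wreath C A T mu eta S nu sigma lam}"
    then obtain nu sigma lam where w: "wreath C A T mu eta S nu sigma lam"
      and x: "x = (mate_zeta C T G u e lam, mate_delta C T G S u e nu, mate_eps C T G e sigma)" by auto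
    interpret c: cells C A T mu eta G S u e nu sigma lam using wreath_cells[OF w] .
    show "x \<in> {(zeta, delta, eps). mixed_opwreath C A T mu eta G zeta delta eps}"
      proof -
        have "mixed_opwreath C A T mu eta G (mate_zeta C T G u e lam) (mate_delta C T G S u e nu) (mate_eps C T G e sigma)"
          using c.wreath_iff w by blast
        thus ?thesis using x by blast
      qed
  next
    fix x assume "x \<in> {(zeta, delta, eps). mixed_opwreath C A T mu eta G zeta delta eps}"
    then obtain zeta delta eps where m: "mixed_opwreath C A T mu eta G zeta delta eps"
      and x: "x = (zeta, delta, eps)" by auto
    have tz: "good zeta" "dom2 C zeta = G \<cdot> T" "cod2 C zeta = T \<cdot> G"
      and td: "good delta" "dom2 C delta = G" "cod2 C delta = T \<cdot> G \<cdot> G"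
      and te: "good eps" "dom2 C eps = G" "cod2 C eps = T"
      using m unfolding mixed_opwreath_def cell_in_def good_def by auto
    define lam where "lam = LamI (T \<cdot> S) (PtI T zeta)"
    define nu where "nu = LamI (S \<cdot> S) (PtI T (PtI (T \<cdot> G) delta))"
    define sigma where "sigma = LamI \<one> eps"
    have cl: "cells C A T mu eta G S u e nu sigma lam"
      by (rule cellsI') (use tz td te in \<open>simp_all add: lam_def nu_def sigma_def\<close>)
    interpret c: cells C A T mu eta G S u e nu sigma lam by (rule cl)
    have ez: "mate_zeta C T G u e lam = zeta"
      unfolding c.zeta_eq unfolding lam_def
      using Lam_LamI[of "PtI T zeta" "T \<cdot> S"] Pt_PtI[of zeta T] tz by simp
    have ed: "mate_delta C T G S u e nu = delta"
      unfolding c.delta_eq unfolding nu_def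
      using Lam_LamI[of "PtI T (PtI (T \<cdot> G) delta)" "S \<cdot> S"] Pt_PtI[of "PtI (T \<cdot> G) delta" T]
        Pt_PtI[of delta "T \<cdot> G"] td by simp
    have ee: "mate_eps C T G e sigma = eps"
      unfolding c.eps_eq unfolding sigma_def using Lam_LamI[of eps \<one>] te by simp
    have "wreath C A T mu eta S nu sigma lam" using c.wreath_iff m ez ed ee by simp
    thus "x \<in> (\<lambda>(nu, sigma, lam). (mate_zeta C T G u e lam, mate_delta C T G S u e nu, mate_eps C T G e sigma)) `
           {(nu, sigma, lam). wreath C A T mu eta S nu sigma lam}"
      using x ez ed ee by (auto intro!: image_eqI[where x="(nu, sigma, lam)"])
  qed
qed

end

theorem proposition3p4:
  fixes C :: "('o, 'm, 'c) two_cat"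
  assumes "two_category C"
    and "A \<in> ob C"
    and "monad C A T mu eta"
    and "adjunction C A G S u e"
  shows "bij_betw
           (\<lambda>(nu, sigma, lam). (mate_zeta C T G u e lam, mate_delta C T G S u e nu, mate_eps C T G e sigma))
           {(nu, sigma, lam). wreath C A T mu eta S nu sigma lam}
           {(zeta, delta, eps). mixed_opwreath C A T mu eta G zeta delta eps}"
proof -
  interpret setting C A T mu eta G S u e
    by (intro setting.intro tc.intro setting_axioms.intro) (rule assms)+
  show ?thesis by (rule main)
qed

end
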